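(* Let $r\ge1$ be an integer, let $a,\mu$ be real parameters and $\mathbf{n}=(n_1,\dots,n_r)\in\mathbb{N}_0^r$. Then for $(\xi_1,\dots,\xi_r)\in\mathbb{R}^r$, $$\mathcal{F}\big(f_r(x_1,\dots,x_r;n_1,\dots,n_r,a,\mu)\big)(\xi_1,\dots,\xi_r)=2^{2ra+\frac{r(r-5)}{4}+\sum_{j=1}^{r-1}jn_{j+1}}\prod_{j=1}^{r}\left\{\frac{\left(2\left(|\mathbf{n}^{j+1}|+\mu+\frac{r-j}{2}\right)\right)_{n_j}}{n_j!}\,\Theta_j^r(a,\mu,\mathbf{n};\xi_j)\right\},$$ where \begin{multline*} \Theta_j^r(a,\mu,\mathbf{n};\xi_j)=B\left(a+\frac{|\mathbf{n}^{j+1}|+i\xi_j}{2}+\frac{r-j}{4},\ a+\frac{|\mathbf{n}^{j+1}|-i\xi_j}{2}+\frac{r-j}{4}\right)\\ \times{}_3F_2\left(\begin{matrix}-n_j,\ n_j+2\left(|\mathbf{n}^{j+1}|+\mu+\frac{r-j}{2}\right),\ a+\frac{|\mathbf{n}^{j+1}|+i\xi_j}{2}+\frac{r-j}{4}\\ |\mathbf{n}^{j+1}|+\mu+\frac{r-j+1}{2},\ |\mathbf{n}^{j+1}|+2a+\frac{r-j}{2}\end{matrix}\;\Big|\;1\right). \end{multline*} Moreover, in terms of continuous Hahn polynomials, \begin{multline*} \Theta_j^r(a,\mu,\mathbf{n};\xi_j)=\frac{n_j!}{i^{n_j}\left(|\mathbf{n}^{j+1}|+\mu+\frac{r-j+1}{2}\right)_{n_j}\left(|\mathbf{n}^{j+1}|+2a+\frac{r-j}{2}\right)_{n_j}}\\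 \times B\left(a+\frac{|\mathbf{n}^{j+1}|+i\xi_j}{2}+\frac{r-j}{4},\ a+\frac{|\mathbf{n}^{j+1}|-i\xi_j}{2}+\frac{r-j}{4}\right)\\ \times p_{n_j}\Big(\frac{\xi_j}{2};\ a+\frac{|\mathbf{n}^{j+1}|}{2}+\frac{r-j}{4},\ \mu-a+\frac{|\mathbf{n}^{j+1}|+1}{2}+\frac{r-j}{4},\ \mu-a+\frac{|\mathbf{n}^{j+1}|+1}{2}+\frac{r-j}{4},\ a+\frac{|\mathbf{n}^{j+1}|}{2}+\frac{r-j}{4}\Big). \end{multline*}
   Context: Pochhammer symbol: $(\alpha)_0=1$, $(\alpha)_n=\alpha(\alpha+1)\cdots(\alpha+n-1)$. ${}_pF_q\left(\begin{matrix}a_1,\dots,a_p\\ b_1,\dots,b_q\end{matrix}\mid x\right)=\sum_{k\ge0}\frac{(a_1)_k\cdots(a_p)_k}{(b_1)_k\cdots(b_q)_k}\frac{x^k}{k!}$. Beta function $B(p,q)=\Gamma(p)\Gamma(q)/\Gamma(p+q)$. Gegenbauer polynomials: $C_n^{(\lambda)}(x)=\frac{(2\lambda)_n}{n!}\,{}_2F_1\left(\begin{matrix}-n,\ n+2\lambda\\ \lambda+\frac12\end{matrix}\mid\frac{1-x}{2}\right)$. Continuous Hahn polynomials: $p_n(x;a,b,c,d)=i^n\frac{(a+c)_n(a+d)_n}{n!}\,{}_3F_2\left(\begin{matrix}-n,\ n+a+b+c+d-1,\ a+ix\\ a+c,\ a+d\end{matrix}\mid1\right)$. Notation: for $\mathbf{n}=(n_1,\dots,n_r)$,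 $|\mathbf{n}^j|=n_j+\cdots+n_r$ for $1\le j\le r$, and $|\mathbf{n}^{r+1}|=0$. For $\boldsymbol{y}=(y_1,\dots,y_r)$, $\boldsymbol{y}_0=0$, $\boldsymbol{y}_j=(y_1,\dots,y_j)$, $\|\cdot\|$ the Euclidean norm. Ball polynomials: $P^{\mu}_{\mathbf{n}}(\boldsymbol{y})=\prod_{j=1}^{r}(1-\|\boldsymbol{y}_{j-1}\|^2)^{n_j/2}C^{(\lambda_j)}_{n_j}\big(y_j/\sqrt{1-\|\boldsymbol{y}_{j-1}\|^2}\big)$ with $\lambda_j=\mu+|\mathbf{n}^{j+1}|+\frac{r-j}{2}$. Define $f_r(x_1,\dots,x_r;n_1,\dots,n_r,a,\mu)=\prod_{j=1}^{r}(1-\tanh^2 x_j)^{a+\frac{r-j}{4}}\,P^{\mu}_{\mathbf{n}}(\upsilon_1,\dots,\upsilon_r)$, where $\upsilon_1=\tanh x_1$ and $\upsilon_j=\tanh x_j\sqrt{(1-\tanh^2x_1)\cdots(1-\tanh^2 x_{j-1})}$ for $j\ge2$. Fourier transform: $\mathcal{F}(f)(\xi_1,\dots,\xi_r)=\int_{\mathbb{R}^r}e^{-i(\xi_1x_1+\cdots+\xi_rx_r)}f(x_1,\dots,x_r)\,dx_1\cdots dx_r$. *)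

theory Defs
  imports "HOL-Analysis.Analysis"
begin

definition hypergeom :: "'a::{real_normed_field,banach} list \<Rightarrow> 'a list \<Rightarrow> 'a \<Rightarrow> 'a" where
  "hypergeom as bs x =
     (\<Sum>k. (prod_list (map (\<lambda>c. pochhammer c k) as) / prod_list (map (\<lambda>c. pochhammer c k) bs))
           * x ^ k / of_nat (fact k))"

definition gegenbauer :: "nat \<Rightarrow> real \<Rightarrow> real \<Rightarrow> real" where
  "gegenbauer n lam x =
     pochhammer (2 * lam) n / fact n
     * hypergeom [- real n, real n + 2 * lam] [lam + 1/2] ((1 - x) / 2)"

definition cont_hahn :: "nat \<Rightarrow> real \<Rightarrow> complex \<Rightarrow> complex \<Rightarrow> complex \<Rightarrow> complex \<Rightarrow> complex" where
  "cont_hahn n x a b c d =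
     \<i> ^ n * pochhammer (a + c) n * pochhammer (a + d) n / of_nat (fact n)
     * hypergeom [- of_nat n, of_nat n + a + b + c + d - 1, a + \<i> * of_real x] [a + c, a + d] 1"

text \<open>Tail sums |n^j| = n_j + ... + n_r (zero for j = r+1).\<close>
definition tailsum :: "nat \<Rightarrow> (nat \<Rightarrow> nat) \<Rightarrow> nat \<Rightarrow> nat" where
  "tailsum r n j = (\<Sum>k=j..r. n k)"

definition ball_poly :: "nat \<Rightarrow> real \<Rightarrow> (nat \<Rightarrow> nat) \<Rightarrow> (nat \<Rightarrow> real) \<Rightarrow> real" where
  "ball_poly r mu n y =
     (\<Prod>j=1..r.
        let s = 1 - (\<Sum>k=1..<j. (y k)^2);
            lam = mu + real (tailsum r n (j+1)) + (real r - real j) / 2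
        in s powr (real (n j) / 2) * gegenbauer (n j) lam (y j / sqrt s))"

definition upsilon :: "(nat \<Rightarrow> real) \<Rightarrow> nat \<Rightarrow> real" where
  "upsilon x j = tanh (x j) * sqrt (\<Prod>k=1..<j. 1 - (tanh (x k))^2)"

definition f_r :: "nat \<Rightarrow> (nat \<Rightarrow> nat) \<Rightarrow> real \<Rightarrow> real \<Rightarrow> (nat \<Rightarrow> real) \<Rightarrow> real" where
  "f_r r n a mu x =
     (\<Prod>j=1..r. (1 - (tanh (x j))^2) powr (a + (real r - real j) / 4))
     * ball_poly r mu n (upsilon x)"

definition fourier_integrand :: "nat \<Rightarrow> ((nat \<Rightarrow> real) \<Rightarrow> complex) \<Rightarrow> (nat \<Rightarrow> real) \<Rightarrow> (nat \<Rightarrow> real) \<Rightarrow> complex" where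
  "fourier_integrand r f xi x = exp (- \<i> * of_real (\<Sum>j=1..r. xi j * x j)) * f x"

definition fourier :: "nat \<Rightarrow> ((nat \<Rightarrow> real) \<Rightarrow> complex) \<Rightarrow> (nat \<Rightarrow> real) \<Rightarrow> complex" where
  "fourier r f xi = integral\<^sup>L (PiM {1..r} (\<lambda>_. lborel)) (fourier_integrand r f xi)"

definition Theta :: "nat \<Rightarrow> nat \<Rightarrow> real \<Rightarrow> real \<Rightarrow> (nat \<Rightarrow> nat) \<Rightarrow> real \<Rightarrow> complex" where
  "Theta r j a mu n xi =
     (let N = real (tailsum r n (j+1));
          q = (real r - real j);
          alpha = of_real a + (of_real N + \<i> * of_real xi) / 2 + of_real (q / 4);
          beta  = of_real a + (of_real N - \<i> * of_real xi) / 2 + of_real (q / 4)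
      in Beta alpha beta
         * hypergeom [- of_nat (n j), of_real (real (n j) + 2 * (N + mu + q / 2)), alpha]
                     [of_real (N + mu + (q + 1) / 2), of_real (N + 2 * a + q / 2)] 1)"

end

theory Submission
  imports Defs
begin

lemma ai_lborel:
  fixes f :: "real \<Rightarrow> complex"
  assumes ai: "f absolutely_integrable_on S" and S: "S \<in> sets borel" and m: "f \<in> borel_measurable borel"
  shows "set_integrable lborel S f" "set_lebesgue_integral lborel S f = integral S f"
proof -
  have mm: "(\<lambda>x. indicator S x *\<^sub>R f x) \<in> borel_measurable lborel" using S m by measurable
  show 1: "set_integrable lborel S f"
    using ai unfolding set_integrable_def using integrable_completion[OF mm] by simp
  show "set_lebesgue_integral lborel S f = integral S f"
    by (rule set_borel_integral_eq_integral(2)[OF 1])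
qed

definition cpw :: "real \<Rightarrow> complex \<Rightarrow> complex" where
  "cpw t w = exp (w * of_real (ln t))"

lemma cpw_measurable[measurable]: "(\<lambda>t. cpw t w) \<in> borel_measurable borel"
  unfolding cpw_def by measurable

lemma cpw_powr: "t > 0 \<Longrightarrow> cpw t w = of_real t powr w"
  by (simp add: cpw_def powr_def Ln_of_real mult.commute)

lemma norm_cpw: "norm (cpw t w) = exp (Re w * ln t)"
  by (simp add: cpw_def)

lemma cpw_mult: "t > 0 \<Longrightarrow> u > 0 \<Longrightarrow> cpw (t*u) w = cpw t w * cpw u w"
  by (simp add: cpw_def ln_mult distrib_left exp_add)

lemma cpw_add: "cpw t (v + w) = cpw t v * cpw t w"
  by (simp add: cpw_def distrib_right exp_add)

lemma cpw_divide: "t > 0 \<Longrightarrow> u > 0 \<Longrightarrow> cpw (t/u) w = cpw t w / cpw u w"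
  by (simp add: cpw_def ln_div right_diff_distrib exp_diff)

lemma SG:
  fixes z :: complex and l :: real
  assumes z: "Re z > 0" and l: "l > 0"
  shows "set_integrable lborel {0<..} (\<lambda>t. cpw t (z-1) * of_real (exp (-(l*t))))"
    "(LINT t:{0<..}|lborel. cpw t (z-1) * of_real (exp (-(l*t)))) = Gamma z * cpw l (-z)"
proof -
  define Gm where "Gm = (\<lambda>u. cpw u (z-1) * of_real (exp (-u)))"
  have g1: "Gm absolutely_integrable_on {0<..}"
    using absolutely_integrable_Gamma_integral'[OF z]
    by (rule iffD1[OF set_integrable_cong, rotated 3]) (auto simp: Gm_def cpw_powr exp_minus field_simps)
  have g2: "integral {0<..} Gm = Gamma z"
  proof -
    have "integral {0<..} Gm = integral {0<..} (\<lambda>t. of_real t powr (z - 1) / of_real (exp t))"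
      by (rule integral_cong) (auto simp: Gm_def cpw_powr exp_minus field_simps)
    also have "\<dots> = Gamma z" using Gamma_integral_complex'[OF z] by (rule integral_unique)
    finally show ?thesis .
  qed
  have img: "(\<lambda>t. l*t) ` {0<..} = {0<..}"
  proof (auto simp: l)
    fix x :: real assume "x > 0"
    then show "x \<in> (\<lambda>t. l*t) ` {0<..}" using l by (intro image_eqI[of _ _ "x/l"]) auto
  qed
  have inj: "inj_on (\<lambda>t. l*t) {0<..}" using l by (auto simp: inj_on_def)
  have cv: "(\<lambda>t. \<bar>l\<bar> *\<^sub>R Gm (l*t)) absolutely_integrable_on {0<..} \<and>
      integral {0<..} (\<lambda>t. \<bar>l\<bar> *\<^sub>R Gm (l*t)) = Gamma z"
    using has_absolute_integral_change_of_variables_real[of "{0<..}" "\<lambda>t. l*t" "\<lambda>_. l" Gm "Gamma z"]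
      g1 g2 img l inj
    by (auto intro!: derivative_eq_intros)
  have m: "(\<lambda>t. \<bar>l\<bar> *\<^sub>R Gm (l*t)) \<in> borel_measurable borel" unfolding Gm_def by measurable
  note L = ai_lborel[OF conjunct1[OF cv] _ m]
  have L2: "(LINT t:{0<..}|lborel. \<bar>l\<bar> *\<^sub>R Gm (l*t)) = Gamma z"
    using L(2) cv by (simp only: borel_open open_greaterThan)
  have eq: "cpw t (z-1) * of_real (exp (-(l*t))) = cpw l (-z) * (\<bar>l\<bar> *\<^sub>R Gm (l*t))" if "t > 0" for t
  proof -
    have "cpw l (-z) * (\<bar>l\<bar> *\<^sub>R Gm (l*t)) = cpw l (-z) * of_real l * cpw l (z-1) * cpw t (z-1) * of_real (exp (-(l*t)))"
      using l that by (simp add: Gm_def cpw_mult scaleR_conv_of_real)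
    also have "cpw l (-z) * of_real l * cpw l (z-1) = cpw l (-z + 1 + (z - 1))"
    proof -
      have "of_real l = cpw l 1" using l by (simp add: cpw_def exp_of_real)
      then show ?thesis by (simp only: cpw_add)
    qed
    finally show ?thesis by (simp add: cpw_def)
  qed
  show "set_integrable lborel {0<..} (\<lambda>t. cpw t (z-1) * of_real (exp (-(l*t))))"
    using set_integrable_mult_right[OF L(1), of "cpw l (-z)"]
    by (rule iffD1[OF set_integrable_cong, rotated 3]) (auto simp: eq)
  have "(LINT t:{0<..}|lborel. cpw t (z-1) * of_real (exp (-(l*t)))) = 
        (LINT t:{0<..}|lborel. cpw l (-z) * (\<bar>l\<bar> *\<^sub>R Gm (l*t)))"
    by (rule set_lebesgue_integral_cong) (auto simp: eq)
  also have "\<dots> = cpw l (-z) * (LINT t:{0<..}|lborel. \<bar>l\<bar> *\<^sub>R Gm (l*t))"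
    by (rule set_integral_mult_right)
  also have "\<dots> = cpw l (-z) * Gamma z" by (simp only: L2)
  finally show "(LINT t:{0<..}|lborel. cpw t (z-1) * of_real (exp (-(l*t)))) = Gamma z * cpw l (-z)"
    by simp
qed

lemma SG':
  fixes z K :: complex and l :: real
  assumes z: "Re z > 0" and l: "l > 0"
  shows "integrable lborel (\<lambda>y. indicator {0<..} y *\<^sub>R (K * (cpw y (z-1) * of_real (exp (-(l*y))))))"
    "(\<integral>y. indicator {0<..} y *\<^sub>R (K * (cpw y (z-1) * of_real (exp (-(l*y))))) \<partial>lborel) = K * (Gamma z * cpw l (-z))"
proof -
  show "integrable lborel (\<lambda>y. indicator {0<..} y *\<^sub>R (K * (cpw y (z-1) * of_real (exp (-(l*y))))))"
    using set_integrable_mult_right[OF SG(1)[OF z l], of K] unfolding set_integrable_def .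
  have "(LINT y:{0<..}|lborel. K * (cpw y (z-1) * of_real (exp (-(l*y))))) = K * (Gamma z * cpw l (-z))"
    using SG(2)[OF z l] by simp
  then show "(\<integral>y. indicator {0<..} y *\<^sub>R (K * (cpw y (z-1) * of_real (exp (-(l*y))))) \<partial>lborel) = K * (Gamma z * cpw l (-z))"
    unfolding set_lebesgue_integral_def .
qed

lemma cpw_one[simp]: "cpw 1 w = 1" by (simp add: cpw_def)

lemma cpw_of_real: "t > 0 \<Longrightarrow> cpw t (of_real x) = of_real (t powr x)"
  by (simp add: cpw_def powr_def exp_of_real flip: of_real_mult)

lemma exp_ofr: "exp ((complex_of_real a - 1) * complex_of_real b) = of_real (exp ((a-1)*b))"
  by (metis exp_of_real of_real_1 of_real_diff of_real_mult)

lemma Ky: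
  fixes c :: real and s :: complex
  assumes c: "c > 0" and s1: "Re s > 0" and s2: "Re s < c"
  shows "set_integrable lborel {0<..} (\<lambda>y. cpw y (s-1) * of_real ((1+y) powr (-c)))"
    "(LINT y:{0<..}|lborel. cpw y (s-1) * of_real ((1+y) powr (-c))) = Gamma s * Gamma (of_real c - s) / Gamma (of_real c)"
proof -
  define A :: "real set" where "A = {0<..}"
  define G where "G = (\<lambda>w t y. indicator A t *\<^sub>R (indicator A y *\<^sub>R 
     ((cpw t (of_real c - 1) * of_real (exp (-t))) * (cpw y (w-1) * of_real (exp (-(t*y)))))))"
  have Gm: "case_prod (G w) \<in> borel_measurable (lborel \<Otimes>\<^sub>M lborel)" for w
    unfolding G_def A_def by measurable
  have inner: "integrable lborel (\<lambda>y. G w t y) \<and> (\<integral>y. G w t y \<partial>lborel) = 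
       indicator A t *\<^sub>R (Gamma w * (cpw t (of_real c - w - 1) * of_real (exp (-(1*t)))))" if w: "Re w > 0" for w t
  proof (cases "t > 0")
    case True
    note X = SG'[OF w True, of "cpw t (of_real c - 1) * of_real (exp (-t))"]
    have e: "cpw t (of_real c - 1) * of_real (exp (-t)) * (Gamma w * cpw t (-w)) = 
        Gamma w * (cpw t (of_real c - w - 1) * of_real (exp (-(1*t))))"
    proof -
      have "cpw t (of_real c - w - 1) = cpw t (of_real c - 1) * cpw t (-w)"
        by (simp add: cpw_add[symmetric] algebra_simps)
      then show ?thesis by (simp add: algebra_simps)
    qed
    show ?thesis using X True unfolding G_def A_def e by simp
  next
    case False
    then show ?thesis unfolding G_def A_def by simp
  qed
  have norm_eq: "complex_of_real (norm (G s t y)) = G (of_real (Re s)) t y" for t y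
    by (auto simp: G_def A_def indicator_def norm_mult norm_cpw cpw_def exp_of_real norm_divide exp_ofr)
  define sc where "sc = complex_of_real (Re s)"
  have sc: "Re sc > 0" "Re (of_real c - sc) > 0" "Re (of_real c - s) > 0" using s1 s2 by (auto simp: sc_def)
  define R where "R = (\<lambda>t. indicator A t *\<^sub>R (Gamma sc * (cpw t (of_real c - sc - 1) * of_real (exp (-(1*t))))))"
  have Rint: "integrable lborel R"
    unfolding R_def A_def using SG'(1)[OF sc(2) zero_less_one, of "Gamma sc"] by simp
  have "(\<lambda>t. complex_of_real (\<integral>y. norm (G s t y) \<partial>lborel)) = R"
  proof
    fix t
    have "complex_of_real (\<integral>y. norm (G s t y) \<partial>lborel) = (\<integral>y. complex_of_real (norm (G s t y)) \<partial>lborel)"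
      by simp
    also have "\<dots> = (\<integral>y. G sc t y \<partial>lborel)" unfolding norm_eq sc_def ..
    also have "\<dots> = R t" using inner[OF sc(1)] unfolding R_def by simp
    finally show "complex_of_real (\<integral>y. norm (G s t y) \<partial>lborel) = R t" .
  qed
  then have integ1: "integrable lborel (\<lambda>t. \<integral>y. norm (G s t y) \<partial>lborel)"
    using Rint complex_of_real_integrable_eq by metis
  have integ2: "AE t in lborel. integrable lborel (\<lambda>y. G s t y)"
    using inner[OF s1] by simp
  have int2: "integrable (lborel \<Otimes>\<^sub>M lborel) (case_prod (G s))"
    by (rule lborel_pair.Fubini_integrable) (use Gm integ1 integ2 in auto)
  have Fub: "(\<integral>y. (\<integral>t. G s t y \<partial>lborel) \<partial>lborel) = (\<integral>t. (\<integral>y. G s t y \<partial>lborel) \<partial>lborel)"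
    by (rule lborel_pair.Fubini_integral[OF int2])
  have "(\<integral>t. (\<integral>y. G s t y \<partial>lborel) \<partial>lborel) = 
      (\<integral>t. indicator A t *\<^sub>R (Gamma s * (cpw t (of_real c - s - 1) * of_real (exp (-(1*t))))) \<partial>lborel)"
    using inner[OF s1] by simp
  also have "\<dots> = Gamma s * Gamma (of_real c - s)"
    unfolding A_def using SG'(2)[OF sc(3) zero_less_one, of "Gamma s"] by simp
  finally have RHS: "(\<integral>t. (\<integral>y. G s t y \<partial>lborel) \<partial>lborel) = Gamma s * Gamma (of_real c - s)" .
  define H where "H = (\<lambda>y. cpw y (s-1) * of_real ((1+y) powr (-c)))"
  have innerL: "(\<integral>t. G s t y \<partial>lborel) = indicator A y *\<^sub>R (Gamma (of_real c) * H y)" for y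
  proof (cases "y > 0")
    case True
    have yy: "1 + y > 0" using True by simp
    have cc: "Re (complex_of_real c) > 0" using c by simp
    have eq: "G s t y = indicator {0<..} t *\<^sub>R (cpw y (s-1) * (cpw t (of_real c - 1) * of_real (exp (-((1+y)*t)))))" for t
    proof -
      have "exp (- t) * exp (- (t * y)) = exp (-((1+y)*t))" by (simp add: exp_add[symmetric] algebra_simps)
      then have "complex_of_real (exp (- t)) * complex_of_real (exp (- (t * y))) = of_real (exp (-((1+y)*t)))"
        by (simp flip: of_real_mult)
      then show ?thesis using True by (simp add: G_def A_def algebra_simps)
    qed
    have "(\<integral>t. G s t y \<partial>lborel) = cpw y (s-1) * (Gamma (of_real c) * cpw (1+y) (- of_real c))"
      unfolding eq using SG'(2)[OF cc yy, of "cpw y (s-1)"] .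
    also have "cpw (1+y) (- of_real c) = of_real ((1+y) powr (-c))"
      using cpw_of_real[OF yy, of "-c"] by simp
    finally show ?thesis using True by (simp add: A_def H_def)
  next
    case False
    then show ?thesis by (simp add: G_def A_def)
  qed
  have "integrable lborel (\<lambda>y. \<integral>t. G s t y \<partial>lborel)"
    by (rule lborel_pair.integrable_snd[OF int2])
  then have "set_integrable lborel A (\<lambda>y. Gamma (of_real c) * H y)"
    unfolding innerL set_integrable_def .
  moreover have "Gamma (complex_of_real c) \<noteq> 0"
    proof
    assume "Gamma (complex_of_real c) = 0"
    then obtain n where "complex_of_real c = of_int n" "n \<le> 0" by (auto simp: Gamma_eq_zero_iff elim!: nonpos_Ints_cases)
    then have "c = of_int n" by (metis Re_complex_of_real of_real_of_int_eq)
    then show False using c \<open>n \<le> 0\<close> by simp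
  qed
  ultimately show "set_integrable lborel {0<..} (\<lambda>y. cpw y (s-1) * of_real ((1+y) powr (-c)))"
    unfolding A_def H_def by simp
  have "Gamma (of_real c) * (LINT y:{0<..}|lborel. cpw y (s-1) * of_real ((1+y) powr (-c))) = 
     (\<integral>y. (\<integral>t. G s t y \<partial>lborel) \<partial>lborel)"
  proof -
    have "(\<integral>y. (\<integral>t. G s t y \<partial>lborel) \<partial>lborel) = (LINT y:A|lborel. Gamma (of_real c) * H y)"
      unfolding innerL set_lebesgue_integral_def ..
    also have "\<dots> = Gamma (of_real c) * (LINT y:A|lborel. H y)" by (rule set_integral_mult_right)
    finally show ?thesis unfolding A_def H_def by simp
  qed
  also have "\<dots> = Gamma s * Gamma (of_real c - s)" using Fub RHS by simp
  finally show "(LINT y:{0<..}|lborel. cpw y (s-1) * of_real ((1+y) powr (-c))) = Gamma s * Gamma (of_real c - s) / Gamma (of_real c)"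
    using \<open>Gamma (complex_of_real c) \<noteq> 0\<close> by (simp add: field_simps)
qed

lemma K:
  fixes c :: real and s :: complex
  assumes c: "c > 0" and s1: "Re s > 0" and s2: "Re s < c"
  shows "integrable lborel (\<lambda>t. exp (- (2 * s * of_real t)) * of_real ((1 + exp (-2*t)) powr (-c)))"
    "(\<integral>t. exp (- (2 * s * of_real t)) * of_real ((1 + exp (-2*t)) powr (-c)) \<partial>lborel) = 
       Gamma s * Gamma (of_real c - s) / (2 * Gamma (of_real c))"
proof -
  define H where "H = (\<lambda>y. cpw y (s-1) * of_real ((1+y) powr (-c)))"
  define b where "b = Gamma s * Gamma (of_real c - s) / Gamma (of_real c)"
  have Hm: "H \<in> borel_measurable borel" unfolding H_def by measurable
  have "set_integrable lborel {0<..} H" using Ky(1)[OF c s1 s2] unfolding H_def .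
  then have Hai: "H absolutely_integrable_on {0<..}"
    unfolding set_integrable_def using integrable_completion[of "\<lambda>x. indicator {0<..} x *\<^sub>R H x" lborel] Hm
    by (simp add: borel_measurable_indicator)
  have Hint: "integral {0<..} H = b"
    using set_borel_integral_eq_integral(2)[OF \<open>set_integrable lborel {0<..} H\<close>] Ky(2)[OF c s1 s2]
    unfolding H_def b_def by simp
  have img: "(\<lambda>t. exp (-2*t)) ` UNIV = ({0<..} :: real set)"
  proof -
    have "x \<in> range (\<lambda>t. exp (-2*t))" if "x > 0" for x :: real
      using that by (intro image_eqI[of _ _ "- ln x / 2"]) auto
    then show ?thesis by auto
  qed
  have inj: "inj_on (\<lambda>t::real. exp (-2*t)) UNIV" by (auto simp: inj_on_def)
  have der: "((\<lambda>t. exp (-2*t)) has_real_derivative (-2 * exp (-2*x))) (at x within UNIV)" for x :: real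
    by (auto intro!: derivative_eq_intros)
  have cv: "(\<lambda>t. \<bar>-2 * exp (-2*t)\<bar> *\<^sub>R H (exp (-2*t))) absolutely_integrable_on UNIV \<and>
      integral UNIV (\<lambda>t. \<bar>-2 * exp (-2*t)\<bar> *\<^sub>R H (exp (-2*t))) = b"
    using has_absolute_integral_change_of_variables_real[of UNIV "\<lambda>t. exp (-2*t)" "\<lambda>t. -2 * exp (-2*t)" H b]
      Hai Hint img inj der by simp
  have eq: "\<bar>-2 * exp (-2*t)\<bar> *\<^sub>R H (exp (-2*t)) = 2 * (exp (- (2 * s * of_real t)) * of_real ((1 + exp (-2*t)) powr (-c)))" for t :: real
  proof -
    have "cpw (exp (-2*t)) (s-1) = exp ((s-1) * of_real (-2*t))" by (simp add: cpw_def)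
    moreover have "complex_of_real (exp (-2*t)) = exp (of_real (-2*t))" by (rule exp_of_real[symmetric])
    ultimately have "of_real (exp (-2*t)) * cpw (exp (-2*t)) (s-1) = exp (- (2 * s * of_real t))"
      by (simp add: exp_add[symmetric] algebra_simps)
    then show ?thesis by (simp add: H_def scaleR_conv_of_real algebra_simps)
  qed
  have cv2: "(\<lambda>t. 2 * (exp (- (2 * s * of_real t)) * of_real ((1 + exp (-2*t)) powr (-c)))) absolutely_integrable_on UNIV \<and>
      integral UNIV (\<lambda>t. 2 * (exp (- (2 * s * of_real t)) * of_real ((1 + exp (-2*t)) powr (-c)))) = b"
    using cv unfolding eq .
  have m2: "(\<lambda>t. 2 * (exp (- (2 * s * of_real t)) * of_real ((1 + exp (-2*t)) powr (-c)))) \<in> borel_measurable borel"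
    by measurable
  note L = ai_lborel[OF conjunct1[OF cv2] _ m2]
  have I1: "integrable lborel (\<lambda>t. 2 * (exp (- (2 * s * of_real t)) * of_real ((1 + exp (-2*t)) powr (-c))))"
    using L(1) by (simp add: set_integrable_def)
  have I2: "(\<integral>t. 2 * (exp (- (2 * s * of_real t)) * of_real ((1 + exp (-2*t)) powr (-c))) \<partial>lborel) = b"
    using L(2) cv2 by (simp add: set_lebesgue_integral_def)
  show "integrable lborel (\<lambda>t. exp (- (2 * s * of_real t)) * of_real ((1 + exp (-2*t)) powr (-c)))"
    using integrable_mult_right[OF I1, of "1/2"] by simp
  show "(\<integral>t. exp (- (2 * s * of_real t)) * of_real ((1 + exp (-2*t)) powr (-c)) \<partial>lborel) = 
       Gamma s * Gamma (of_real c - s) / (2 * Gamma (of_real c))"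
  proof -
    have "(\<integral>t. exp (- (2 * s * of_real t)) * of_real ((1 + exp (-2*t)) powr (-c)) \<partial>lborel) = 
       (\<integral>t. 2 * (exp (- (2 * s * of_real t)) * of_real ((1 + exp (-2*t)) powr (-c))) \<partial>lborel) / 2"
      by simp
    also have "\<dots> = b / 2" unfolding I2 ..
    finally show ?thesis unfolding b_def by simp
  qed
qed

lemma tanh_facts:
  fixes t b :: real and k :: nat
  shows "(1 - tanh t ^ 2) powr b * ((1 - tanh t) / 2) ^ k =
     4 powr b * exp (- (2 * (b + k) * t)) * (1 + exp (-2*t)) powr (- (2*b + k))"
proof -
  define e where "e = exp (-2*t)"
  have e: "e > 0" by (simp add: e_def)
  have th: "tanh t = (1 - e) / (1 + e)" by (simp add: e_def tanh_real_altdef)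
  have a: "1 - tanh t ^ 2 = 4 * e / (1 + e)^2"
  proof -
    have "1 + e \<noteq> 0" using e by simp
    have "1 - ((1 - e) / (1 + e))^2 = 1 - (1 - e)^2 / (1 + e)^2" by (simp only: power_divide)
    also have "\<dots> = ((1+e)^2 - (1-e)^2) / (1 + e)^2"
    proof -
      have "(1+e)^2 / (1+e)^2 = (1::real)" using \<open>1 + e \<noteq> 0\<close> by (intro divide_self) simp
      then show ?thesis by (simp only: diff_divide_distrib)
    qed
    also have "(1+e)^2 - (1-e)^2 = 4 * e" by (simp add: power2_eq_square algebra_simps)
    finally show ?thesis unfolding th .
  qed
  have bb: "(1 - tanh t) / 2 = e / (1 + e)" using e unfolding th by (simp add: field_simps)
  have f1: "(4 * e / (1 + e)^2) powr b = 4 powr b * e powr b * (1+e) powr (-2*b)"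
  proof -
    have p2: "(1+e)^2 = (1+e) powr 2" using e by (simp add: powr_realpow)
    have "(4 * e / (1 + e)^2) powr b = (4 * e) powr b / ((1 + e)^2) powr b"
      using e by (simp add: powr_divide)
    also have "(4 * e) powr b = 4 powr b * e powr b" using e by (simp add: powr_mult)
    also have "((1 + e)^2) powr b = (1+e) powr (2*b)" unfolding p2 by (simp add: powr_powr)
    also have "4 powr b * e powr b / (1+e) powr (2*b) = 4 powr b * e powr b * (1+e) powr (-2*b)"
      by (simp add: powr_minus divide_inverse)
    finally show ?thesis .
  qed
  have f2: "(e / (1 + e)) ^ k = e powr k * (1+e) powr (- real k)"
  proof -
    have "(e / (1 + e)) ^ k = e ^ k / (1+e) ^ k" by (rule power_divide)
    also have "\<dots> = e powr k / (1+e) powr k" using e by (simp add: powr_realpow)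
    finally show ?thesis by (simp add: powr_minus divide_inverse)
  qed
  have f3: "e powr b * e powr k = exp (- (2 * (b + k) * t))"
  proof -
    have "e powr b * e powr k = e powr (b + k)" by (simp add: powr_add)
    also have "\<dots> = exp ((-2*t) * (b + k))" unfolding e_def by (rule exp_powr_real)
    finally show ?thesis by (simp add: algebra_simps)
  qed
  have f4: "(1+e) powr (-2*b) * (1+e) powr (- real k) = (1+e) powr (- (2*b + k))"
    by (simp add: powr_add[symmetric])
  have "(1 - tanh t ^ 2) powr b * ((1 - tanh t) / 2) ^ k = 
     (4 powr b * e powr b * (1+e) powr (-2*b)) * (e powr k * (1+e) powr (- real k))"
    unfolding a bb f1 f2 ..
  also have "\<dots> = 4 powr b * (e powr b * e powr k) * ((1+e) powr (-2*b) * (1+e) powr (- real k))"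
    by (simp only: mult_ac)
  also have "\<dots> = 4 powr b * exp (- (2 * (b + k) * t)) * (1 + e) powr (- (2*b + k))"
    unfolding f3 f4 ..
  finally show ?thesis unfolding e_def .
qed

lemma Jk:
  fixes b \<xi> :: real and k :: nat
  assumes b: "b > 0"
  shows "integrable lborel (\<lambda>t. exp (- \<i> * of_real (\<xi> * t)) * of_real ((1 - tanh t ^ 2) powr b * ((1 - tanh t) / 2) ^ k))"
    "(\<integral>t. exp (- \<i> * of_real (\<xi> * t)) * of_real ((1 - tanh t ^ 2) powr b * ((1 - tanh t) / 2) ^ k) \<partial>lborel)
      = of_real (2 powr (2*b - 1)) * Beta (of_real b - \<i> * of_real \<xi> / 2) (of_real b + of_nat k + \<i> * of_real \<xi> / 2)"
proof -
  define s where "s = of_real b + of_nat k + \<i> * of_real \<xi> / 2"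
  define c where "c = 2*b + real k"
  have c: "c > 0" "Re s > 0" "Re s < c" using b by (auto simp: c_def s_def)
  have eq: "exp (- \<i> * of_real (\<xi> * t)) * of_real ((1 - tanh t ^ 2) powr b * ((1 - tanh t) / 2) ^ k) =
     of_real (4 powr b) * (exp (- (2 * s * of_real t)) * of_real ((1 + exp (-2*t)) powr (-c)))" for t
  proof -
    have "exp (- \<i> * of_real (\<xi> * t)) * of_real (exp (- (2 * (b + k) * t))) = exp (- (2 * s * of_real t))"
      by (simp add: exp_of_real[symmetric] exp_add[symmetric] s_def algebra_simps)
    then show ?thesis unfolding tanh_facts c_def by (simp add: algebra_simps)
  qed
  show "integrable lborel (\<lambda>t. exp (- \<i> * of_real (\<xi> * t)) * of_real ((1 - tanh t ^ 2) powr b * ((1 - tanh t) / 2) ^ k))"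
    unfolding eq using K(1)[OF c] by simp
  have "(\<integral>t. exp (- \<i> * of_real (\<xi> * t)) * of_real ((1 - tanh t ^ 2) powr b * ((1 - tanh t) / 2) ^ k) \<partial>lborel)
     = of_real (4 powr b) * (Gamma s * Gamma (of_real c - s) / (2 * Gamma (of_real c)))"
    unfolding eq using K(2)[OF c] by simp
  also have "of_real c - s = of_real b - \<i> * of_real \<xi> / 2" by (simp add: c_def s_def)
  also have "of_real c = (of_real b - \<i> * of_real \<xi> / 2) + s" by (simp add: c_def s_def)
  also have "complex_of_real (4 powr b) = 2 * of_real (2 powr (2*b - 1))"
  proof -
    have "(4::real) powr b = 2 powr (2*b)" by (simp add: powr_powr[symmetric])
    also have "\<dots> = 2 * 2 powr (2*b - 1)" by (simp add: powr_diff)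
    finally show ?thesis by simp
  qed
  finally show "(\<integral>t. exp (- \<i> * of_real (\<xi> * t)) * of_real ((1 - tanh t ^ 2) powr b * ((1 - tanh t) / 2) ^ k) \<partial>lborel)
      = of_real (2 powr (2*b - 1)) * Beta (of_real b - \<i> * of_real \<xi> / 2) (of_real b + of_nat k + \<i> * of_real \<xi> / 2)"
    unfolding s_def Beta_def by (simp add: field_simps)
qed

lemma hyp_term:
  fixes as bs :: "'a::{real_normed_field,banach} list"
  shows "hypergeom (- of_nat n # as) bs x = (\<Sum>k\<le>n. (pochhammer (- of_nat n) k * prod_list (map (\<lambda>c. pochhammer c k) as)
      / prod_list (map (\<lambda>c. pochhammer c k) bs)) * x ^ k / of_nat (fact k))"
proof -
  have "(\<lambda>k. (prod_list (map (\<lambda>c. pochhammer c k) (- of_nat n # as)) / prod_list (map (\<lambda>c. pochhammer c k) bs)) * x ^ k / of_nat (fact k))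
     = (\<lambda>k. (pochhammer (- of_nat n) k * prod_list (map (\<lambda>c. pochhammer c k) as)
      / prod_list (map (\<lambda>c. pochhammer c k) bs)) * x ^ k / of_nat (fact k))" by simp
  moreover have "(\<lambda>k. (pochhammer (- of_nat n) k * prod_list (map (\<lambda>c. pochhammer c k) as)
      / prod_list (map (\<lambda>c. pochhammer c k) bs)) * x ^ k / of_nat (fact k)) sums
      (\<Sum>k\<le>n. (pochhammer (- of_nat n) k * prod_list (map (\<lambda>c. pochhammer c k) as)
      / prod_list (map (\<lambda>c. pochhammer c k) bs)) * x ^ k / of_nat (fact k))"
    by (rule sums_finite) (auto simp: pochhammer_of_nat_eq_0_iff)
  ultimately show ?thesis unfolding hypergeom_def by (simp add: sums_iff)
qed

lemma Beta_shift:
  fixes b \<xi> :: real and k :: nat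
  assumes b: "b > 0"
  shows "Beta (of_real b - \<i> * of_real \<xi> / 2) (of_real b + of_nat k + \<i> * of_real \<xi> / 2) =
    Beta (of_real b + \<i> * of_real \<xi> / 2) (of_real b - \<i> * of_real \<xi> / 2)
     * pochhammer (of_real b + \<i> * of_real \<xi> / 2) k / pochhammer (of_real (2*b)) k"
proof -
  define al where "al = of_real b + \<i> * of_real \<xi> / 2"
  define be where "be = of_real b - \<i> * of_real \<xi> / 2"
  have np: "z \<notin> \<int>\<^sub>\<le>\<^sub>0" if "Re z > 0" for z :: complex
    using that by (auto elim!: nonpos_Ints_cases)
  have al: "al \<notin> \<int>\<^sub>\<le>\<^sub>0" "Gamma al \<noteq> 0" using b np[of al] by (auto simp: al_def Gamma_eq_zero_iff)
  have tb: "complex_of_real (2*b) \<notin> \<int>\<^sub>\<le>\<^sub>0" "Gamma (complex_of_real (2*b)) \<noteq> 0" 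
    using b np[of "of_real (2*b)"] by (auto simp: Gamma_eq_zero_iff)
  have pa: "Gamma (al + of_nat k) = pochhammer al k * Gamma al"
    using pochhammer_Gamma[OF al(1), of k] al(2) by (simp add: field_simps)
  have pb: "Gamma (complex_of_real (2*b) + of_nat k) = pochhammer (complex_of_real (2*b)) k * Gamma (complex_of_real (2*b))"
    using pochhammer_Gamma[OF tb(1), of k] tb(2) by (simp add: field_simps)
  have pnz: "pochhammer (complex_of_real (2*b)) k \<noteq> 0"
  proof -
    have "pochhammer (2*b) k > 0" using b by (intro pochhammer_pos) simp
    then show ?thesis by (simp only: pochhammer_of_real of_real_eq_0_iff)
  qed
  have s1: "be + (al + of_nat k) = of_real (2*b) + of_nat k" by (simp add: al_def be_def)
  have s2: "al + be = of_real (2*b)" by (simp add: al_def be_def)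
  have "Beta be (al + of_nat k) = Gamma be * (pochhammer al k * Gamma al) / (pochhammer (of_real (2*b)) k * Gamma (of_real (2*b)))"
    unfolding Beta_def s1 pa pb ..
  also have "\<dots> = Beta al be * pochhammer al k / pochhammer (of_real (2*b)) k"
    unfolding Beta_def s2 using pnz tb(2) by (simp add: field_simps)
  finally show ?thesis unfolding al_def be_def by (simp add: add_ac)
qed

lemma field_aux: "(x::complex) * (y * p) / (z * q) / f = (x * y / z / f) * p / q"
  by (simp add: divide_inverse mult_ac)

lemma field_aux2: "(u::complex) * (T * (B * p / q)) = T * v * B * (w * p / q)" if "u = v * w"
  using that by (simp add: divide_inverse mult_ac)

lemma C1:
  fixes b lam \<xi> :: real and n :: nat
  assumes b: "b > 0"
  shows "integrable lborel (\<lambda>t. exp (- \<i> * of_real (\<xi> * t)) * of_real ((1 - tanh t ^ 2) powr b * gegenbauer n lam (tanh t)))"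
    "(\<integral>t. exp (- \<i> * of_real (\<xi> * t)) * of_real ((1 - tanh t ^ 2) powr b * gegenbauer n lam (tanh t)) \<partial>lborel) =
     of_real (2 powr (2*b - 1)) * of_real (pochhammer (2*lam) n / fact n) *
     Beta (of_real b + \<i> * of_real \<xi> / 2) (of_real b - \<i> * of_real \<xi> / 2) *
     hypergeom [- of_nat n, of_real (real n + 2*lam), of_real b + \<i> * of_real \<xi> / 2] [of_real (lam + 1/2), of_real (2*b)] 1"
proof -
  define al where "al = of_real b + \<i> * of_real \<xi> / 2"
  define be where "be = of_real b - \<i> * of_real \<xi> / 2"
  define P where "P = pochhammer (2*lam) n / fact n"
  define cR where "cR = (\<lambda>k. (pochhammer (- real n) k * pochhammer (real n + 2*lam) k / pochhammer (lam + 1/2) k) / fact k)"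
  define T where "T = complex_of_real (2 powr (2*b - 1))"
  define J where "J = (\<lambda>k t. exp (- \<i> * of_real (\<xi> * t)) * of_real ((1 - tanh t ^ 2) powr b * ((1 - tanh t) / 2) ^ k))"
  have geg: "gegenbauer n lam x = P * (\<Sum>k\<le>n. cR k * ((1-x)/2)^k)" for x
    unfolding gegenbauer_def hyp_term P_def
    by (intro arg_cong2[where f="(*)"] refl sum.cong) (simp_all add: cR_def)
  have eq: "exp (- \<i> * of_real (\<xi> * t)) * of_real ((1 - tanh t ^ 2) powr b * gegenbauer n lam (tanh t)) =
     (\<Sum>k\<le>n. of_real (P * cR k) * J k t)" for t
    unfolding geg J_def by (simp add: sum_distrib_left mult_ac)
  have Ji: "integrable lborel (J k)" for k unfolding J_def using Jk(1)[OF b] .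
  show "integrable lborel (\<lambda>t. exp (- \<i> * of_real (\<xi> * t)) * of_real ((1 - tanh t ^ 2) powr b * gegenbauer n lam (tanh t)))"
    unfolding eq using Ji by (intro Bochner_Integration.integrable_sum integrable_mult_right) auto
  have "(\<integral>t. exp (- \<i> * of_real (\<xi> * t)) * of_real ((1 - tanh t ^ 2) powr b * gegenbauer n lam (tanh t)) \<partial>lborel)
     = (\<Sum>k\<le>n. of_real (P * cR k) * (\<integral>t. J k t \<partial>lborel))"
    unfolding eq using Ji by (subst Bochner_Integration.integral_sum) auto
  also have "\<dots> = (\<Sum>k\<le>n. of_real (P * cR k) * (T * (Beta al be * pochhammer al k / pochhammer (of_real (2*b)) k)))"
    unfolding J_def Jk(2)[OF b] Beta_shift[OF b] T_def al_def be_def ..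
  also have "\<dots> = T * of_real P * Beta al be * hypergeom [- of_nat n, of_real (real n + 2*lam), al] [of_real (lam + 1/2), of_real (2*b)] 1"
    unfolding hyp_term sum_distrib_left
  proof (rule sum.cong[OF refl])
    fix k assume "k \<in> {..n}"
    have m: "- (of_nat n :: complex) = of_real (- real n)" by simp
    show "of_real (P * cR k) * (T * (Beta al be * pochhammer al k / pochhammer (of_real (2*b)) k)) =
      T * of_real P * Beta al be * (pochhammer (- of_nat n) k * prod_list (map (\<lambda>c. pochhammer c k) [of_real (real n + 2*lam), al])
        / prod_list (map (\<lambda>c. pochhammer c k) [of_real (lam + 1/2), of_real (2*b)]) * 1 ^ k / of_nat (fact k))"
    proof -
      have "pochhammer (- of_nat n) k * prod_list (map (\<lambda>c. pochhammer c k) [of_real (real n + 2*lam), al])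
        / prod_list (map (\<lambda>c. pochhammer c k) [of_real (lam + 1/2), of_real (2*b)]) * 1 ^ k / of_nat (fact k)
        = of_real (pochhammer (- real n) k) * (of_real (pochhammer (real n + 2*lam) k) * pochhammer al k)
          / (of_real (pochhammer (lam + 1/2) k) * pochhammer (of_real (2*b)) k) / of_real (fact k)"
        unfolding pochhammer_of_real[symmetric] by simp
      also have "\<dots> = of_real (cR k) * pochhammer al k / pochhammer (of_real (2*b)) k"
        unfolding field_aux cR_def by simp
      finally have hW: "pochhammer (- of_nat n) k * prod_list (map (\<lambda>c. pochhammer c k) [of_real (real n + 2*lam), al])
        / prod_list (map (\<lambda>c. pochhammer c k) [of_real (lam + 1/2), of_real (2*b)]) * 1 ^ k / of_nat (fact k)
        = of_real (cR k) * pochhammer al k / pochhammer (of_real (2*b)) k" .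
      show ?thesis unfolding hW by (rule field_aux2) (simp only: of_real_mult)
    qed
  qed
  finally show "(\<integral>t. exp (- \<i> * of_real (\<xi> * t)) * of_real ((1 - tanh t ^ 2) powr b * gegenbauer n lam (tanh t)) \<partial>lborel) =
     of_real (2 powr (2*b - 1)) * of_real (pochhammer (2*lam) n / fact n) *
     Beta (of_real b + \<i> * of_real \<xi> / 2) (of_real b - \<i> * of_real \<xi> / 2) *
     hypergeom [- of_nat n, of_real (real n + 2*lam), of_real b + \<i> * of_real \<xi> / 2] [of_real (lam + 1/2), of_real (2*b)] 1"
    unfolding T_def P_def al_def be_def .
qed

lemma one_minus_tanh_sq_pos: "1 - tanh (t::real) ^ 2 > 0"
proof -
  have "\<bar>tanh t\<bar> < 1" by (simp add: abs_less_iff tanh_real_lt_1 tanh_real_gt_neg1)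
  then have "tanh t ^ 2 < 1" by (simp add: abs_square_less_1)
  then show ?thesis by simp
qed

lemma sum_upsilon:
  "1 - (\<Sum>k=1..<j. (upsilon x k)^2) = (\<Prod>k=1..<j. 1 - (tanh (x k))^2)"
proof (induction j)
  case 0
  then show ?case by simp
next
  case (Suc j)
  show ?case
  proof (cases "j \<ge> 1")
    case True
    have P: "(\<Prod>k=1..<j. 1 - (tanh (x k))^2) \<ge> 0"
      using one_minus_tanh_sq_pos by (intro prod_nonneg) (auto intro: less_imp_le)
    have u: "(upsilon x j)^2 = tanh (x j)^2 * (\<Prod>k=1..<j. 1 - (tanh (x k))^2)"
      unfolding upsilon_def using P by (simp add: power_mult_distrib)
    have "1 - (\<Sum>k=1..<Suc j. (upsilon x k)^2) = (1 - (\<Sum>k=1..<j. (upsilon x k)^2)) - (upsilon x j)^2"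
      using True by (simp add: atLeastLessThanSuc)
    also have "\<dots> = (\<Prod>k=1..<j. 1 - (tanh (x k))^2) * (1 - tanh (x j)^2)"
      unfolding Suc.IH u by (simp add: algebra_simps)
    also have "\<dots> = (\<Prod>k=1..<Suc j. 1 - (tanh (x k))^2)"
      using True by (simp add: atLeastLessThanSuc mult.commute)
    finally show ?thesis .
  next
    case False
    then show ?thesis by simp
  qed
qed

lemma FR:
  fixes r :: nat and n :: "nat \<Rightarrow> nat" and a mu :: real and x :: "nat \<Rightarrow> real"
  shows "f_r r n a mu x = (\<Prod>k=1..r. (1 - tanh (x k) ^ 2) powr (a + (real r - real k)/4 + real (tailsum r n (k+1)) / 2)
       * gegenbauer (n k) (mu + real (tailsum r n (k+1)) + (real r - real k) / 2) (tanh (x k)))"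
proof -
  define u where "u = (\<lambda>k. 1 - tanh (x k) ^ 2)"
  have u: "u k > 0" for k unfolding u_def by (rule one_minus_tanh_sq_pos)
  define S where "S = (\<lambda>j. \<Prod>k=1..<j. u k)"
  have S: "S j > 0" for j unfolding S_def using u by (intro prod_pos) auto
  have s_eq: "1 - (\<Sum>k=1..<j. (upsilon x k)^2) = S j" for j
    unfolding S_def u_def by (rule sum_upsilon)
  have ups: "upsilon x j / sqrt (S j) = tanh (x j)" for j
  proof -
    have "upsilon x j = tanh (x j) * sqrt (S j)" unfolding upsilon_def S_def u_def ..
    moreover have "sqrt (S j) > 0" using S[of j] by simp
    ultimately show ?thesis by simp
  qed
  define G where "G = (\<lambda>j. gegenbauer (n j) (mu + real (tailsum r n (j+1)) + (real r - real j) / 2) (tanh (x j)))"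
  have bp: "ball_poly r mu n (upsilon x) = (\<Prod>j=1..r. S j powr (real (n j) / 2) * G j)"
    unfolding ball_poly_def Let_def s_eq ups G_def ..
  have "(\<Prod>j=1..r. S j powr (real (n j) / 2)) = (\<Prod>j=1..r. \<Prod>k\<in>{k. k \<in> {1..r} \<and> k < j}. u k powr (real (n j) / 2))"
  proof (rule prod.cong[OF refl])
    fix j assume "j \<in> {1..r}"
    then have "{k. k \<in> {1..r} \<and> k < j} = {1..<j}" by auto
    then show "S j powr (real (n j) / 2) = (\<Prod>k\<in>{k. k \<in> {1..r} \<and> k < j}. u k powr (real (n j) / 2))"
      unfolding S_def by (simp add: prod_powr_distrib)
  qed
  also have "\<dots> = (\<Prod>k=1..r. \<Prod>j\<in>{j. j \<in> {1..r} \<and> k < j}. u k powr (real (n j) / 2))"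
    by (rule prod.swap_restrict) auto
  also have "\<dots> = (\<Prod>k=1..r. u k powr (real (tailsum r n (k+1)) / 2))"
  proof (rule prod.cong[OF refl])
    fix k assume "k \<in> {1..r}"
    then have e: "{j. j \<in> {1..r} \<and> k < j} = {k+1..r}" by auto
    have "u k powr (real (tailsum r n (k+1)) / 2) = u k powr (\<Sum>j=k+1..r. real (n j) / 2)"
      unfolding tailsum_def by (simp add: sum_divide_distrib)
    also have "\<dots> = (\<Prod>j=k+1..r. u k powr (real (n j) / 2))"
      using u[of k] by (intro powr_sum) simp
    finally show "(\<Prod>j\<in>{j. j \<in> {1..r} \<and> k < j}. u k powr (real (n j) / 2)) = u k powr (real (tailsum r n (k+1)) / 2)"
      unfolding e by simp
  qed
  finally have SP: "(\<Prod>j=1..r. S j powr (real (n j) / 2)) = (\<Prod>k=1..r. u k powr (real (tailsum r n (k+1)) / 2))" .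
  have "f_r r n a mu x = (\<Prod>j=1..r. u j powr (a + (real r - real j)/4)) * ((\<Prod>j=1..r. S j powr (real (n j) / 2)) * (\<Prod>j=1..r. G j))"
    unfolding f_r_def bp u_def prod.distrib ..
  also have "\<dots> = (\<Prod>k=1..r. (u k powr (a + (real r - real k)/4) * u k powr (real (tailsum r n (k+1)) / 2)) * G k)"
    unfolding SP prod.distrib by (simp add: mult_ac)
  also have "\<dots> = (\<Prod>k=1..r. u k powr (a + (real r - real k)/4 + real (tailsum r n (k+1)) / 2) * G k)"
    by (simp add: powr_add)
  finally show ?thesis unfolding u_def G_def .
qed

lemma Hahn:
  fixes r j :: nat and a mu \<xi> :: real and n :: "nat \<Rightarrow> nat"
  assumes a: "a > 0" and mu: "mu > - 1/2" and j: "j \<le> r"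
  shows "Theta r j a mu n \<xi> =
           (let N = real (tailsum r n (j+1));
                q = real r - real j
            in of_nat (fact (n j))
               / (\<i> ^ (n j) * of_real (pochhammer (N + mu + (q + 1) / 2) (n j))
                  * of_real (pochhammer (N + 2 * a + q / 2) (n j)))
               * Beta (of_real a + (of_real N + \<i> * of_real \<xi>) / 2 + of_real (q / 4))
                      (of_real a + (of_real N - \<i> * of_real \<xi>) / 2 + of_real (q / 4))
               * cont_hahn (n j) (\<xi> / 2)
                   (of_real (a + N / 2 + q / 4))
                   (of_real (mu - a + (N + 1) / 2 + q / 4))
                   (of_real (mu - a + (N + 1) / 2 + q / 4))
                   (of_real (a + N / 2 + q / 4)))"
proof -
  define N where "N = real (tailsum r n (j+1))"
  define q where "q = real r - real j"
  have N: "N \<ge> 0" and q: "q \<ge> 0" using j by (auto simp: N_def q_def)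
  define al where "al = complex_of_real a + (of_real N + \<i> * of_real \<xi>) / 2 + of_real (q / 4)"
  define be where "be = complex_of_real a + (of_real N - \<i> * of_real \<xi>) / 2 + of_real (q / 4)"
  define A where "A = complex_of_real (a + N / 2 + q / 4)"
  define B where "B = complex_of_real (mu - a + (N + 1) / 2 + q / 4)"
  define H where "H = hypergeom [- of_nat (n j), of_real (real (n j) + 2 * (N + mu + q / 2)), al]
                     [of_real (N + mu + (q + 1) / 2), of_real (N + 2 * a + q / 2)] 1"
  define P1 where "P1 = pochhammer (N + mu + (q + 1) / 2) (n j)"
  define P2 where "P2 = pochhammer (N + 2 * a + q / 2) (n j)"
  have P1: "P1 > 0" unfolding P1_def using N q mu by (intro pochhammer_pos) (simp add: field_simps)
  have P2: "P2 > 0" unfolding P2_def using N q a by (intro pochhammer_pos) simp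
  have e1: "A + B = of_real (N + mu + (q + 1) / 2)" by (simp add: A_def B_def field_simps)
  have e2: "A + A = of_real (N + 2 * a + q / 2)" by (simp add: A_def field_simps)
  have e3: "of_nat (n j) + A + B + B + A - 1 = complex_of_real (real (n j) + 2 * (N + mu + q / 2))"
    by (simp add: A_def B_def field_simps)
  have e4: "A + \<i> * of_real (\<xi> / 2) = al" by (simp add: A_def al_def field_simps)
  have ch: "cont_hahn (n j) (\<xi> / 2) A B B A = \<i> ^ (n j) * of_real P1 * of_real P2 / of_nat (fact (n j)) * H"
    unfolding cont_hahn_def e1 e2 e3 e4 H_def P1_def P2_def pochhammer_of_real[symmetric] by simp
  have th: "Theta r j a mu n \<xi> = Beta al be * H"
    unfolding Theta_def Let_def H_def al_def be_def N_def q_def ..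
  have nz: "\<i> ^ (n j) \<noteq> 0" "complex_of_real P1 \<noteq> 0" "complex_of_real P2 \<noteq> 0" "(of_nat (fact (n j)) :: complex) \<noteq> 0"
    using P1 P2 by auto
  show ?thesis unfolding Let_def N_def[symmetric] q_def[symmetric] al_def[symmetric] be_def[symmetric]
    A_def[symmetric] B_def[symmetric] ch th P1_def[symmetric] P2_def[symmetric]
    using nz by (simp add: field_simps)
qed

lemma sum_tail: "(\<Sum>k=1..r. real (tailsum r n (k+1))) = (\<Sum>j=1..r-1. real j * real (n (j+1)))"
proof -
  have "(\<Sum>k=1..r. real (tailsum r n (k+1))) = (\<Sum>k=1..r. \<Sum>i\<in>{i. i \<in> {1..r} \<and> k < i}. real (n i))"
  proof (rule sum.cong[OF refl])
    fix k assume "k \<in> {1..r}"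
    then have "{i. i \<in> {1..r} \<and> k < i} = {k+1..r}" by auto
    then show "real (tailsum r n (k+1)) = (\<Sum>i\<in>{i. i \<in> {1..r} \<and> k < i}. real (n i))"
      unfolding tailsum_def by simp
  qed
  also have "\<dots> = (\<Sum>i=1..r. \<Sum>k\<in>{k. k \<in> {1..r} \<and> k < i}. real (n i))"
    by (rule sum.swap_restrict) auto
  also have "\<dots> = (\<Sum>i=1..r. real (i - 1) * real (n i))"
  proof (rule sum.cong[OF refl])
    fix i assume "i \<in> {1..r}"
    then have "{k. k \<in> {1..r} \<and> k < i} = {1..<i}" by auto
    then show "(\<Sum>k\<in>{k. k \<in> {1..r} \<and> k < i}. real (n i)) = real (i - 1) * real (n i)" by simp
  qed
  also have "\<dots> = (\<Sum>j=1..r-1. real j * real (n (j+1)))"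
  proof (cases r)
    case 0
    then show ?thesis by simp
  next
    case (Suc m)
    have "(\<Sum>i=1..r. real (i - 1) * real (n i)) = (\<Sum>j=0..m. real j * real (n (j+1)))"
      unfolding Suc One_nat_def sum.shift_bounds_cl_Suc_ivl by simp
    also have "\<dots> = (\<Sum>j=1..m. real j * real (n (j+1)))"
      by (simp add: sum.atLeast_Suc_atMost[of 0 m])
    finally show ?thesis using Suc by simp
  qed
  finally show ?thesis .
qed

lemma sum_nat_real: "(\<Sum>k=1..r. real k) = real r * (real r + 1) / 2"
  by (induction r) (auto simp: field_simps)

lemma sum_q: "(\<Sum>k=1..r. (real r - real k)) = real r * (real r - 1) / 2"
proof -
  have "(\<Sum>k=1..r. (real r - real k)) = real r * real r - (\<Sum>k=1..r. real k)"
    by (simp add: sum_subtractf)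
  then show ?thesis unfolding sum_nat_real by (simp add: field_simps)
qed

lemma ThetaEq:
  fixes r k :: nat and a mu \<xi> :: real and n :: "nat \<Rightarrow> nat"
  shows "Theta r k a mu n \<xi> =
     Beta (of_real (a + (real r - real k)/4 + real (tailsum r n (k+1)) / 2) + \<i> * of_real \<xi> / 2)
          (of_real (a + (real r - real k)/4 + real (tailsum r n (k+1)) / 2) - \<i> * of_real \<xi> / 2) *
     hypergeom [- of_nat (n k), of_real (real (n k) + 2 * (mu + real (tailsum r n (k+1)) + (real r - real k) / 2)),
        of_real (a + (real r - real k)/4 + real (tailsum r n (k+1)) / 2) + \<i> * of_real \<xi> / 2]
       [of_real ((mu + real (tailsum r n (k+1)) + (real r - real k) / 2) + 1/2),
        of_real (2 * (a + (real r - real k)/4 + real (tailsum r n (k+1)) / 2))] 1"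
proof -
  define N where "N = real (tailsum r n (k+1))"
  define q where "q = real r - real k"
  have e1: "complex_of_real a + (of_real N + \<i> * of_real \<xi>) / 2 + of_real (q / 4) = of_real (a + q/4 + N / 2) + \<i> * of_real \<xi> / 2"
    by (simp add: field_simps)
  have e2: "complex_of_real a + (of_real N - \<i> * of_real \<xi>) / 2 + of_real (q / 4) = of_real (a + q/4 + N / 2) - \<i> * of_real \<xi> / 2"
    by (simp add: field_simps)
  have e3: "real (n k) + 2 * (N + mu + q / 2) = real (n k) + 2 * (mu + N + q / 2)" by simp
  have e4: "N + mu + (q + 1) / 2 = (mu + N + q / 2) + 1/2" by (simp add: field_simps)
  have e5: "N + 2 * a + q / 2 = 2 * (a + q/4 + N / 2)" by (simp add: field_simps)
  show ?thesis unfolding Theta_def Let_def N_def[symmetric] q_def[symmetric] e1 e2 e3 e4 e5 ..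
qed

theorem theorem3p2:
  fixes r :: nat and a mu :: real and n :: "nat \<Rightarrow> nat" and xi :: "nat \<Rightarrow> real"
  assumes "r \<ge> 1" and "a > 0" and "mu > - 1/2"
  shows "integrable (PiM {1..r} (\<lambda>_. lborel))
           (fourier_integrand r (\<lambda>x. of_real (f_r r n a mu x)) xi)
    \<and> fourier r (\<lambda>x. of_real (f_r r n a mu x)) xi =
      of_real (2 powr (2 * real r * a + real r * (real r - 5) / 4
                       + (\<Sum>j=1..r-1. real j * real (n (j+1)))))
      * (\<Prod>j=1..r.
           of_real (pochhammer (2 * (real (tailsum r n (j+1)) + mu + (real r - real j) / 2)) (n j)
                    / fact (n j))
           * Theta r j a mu n (xi j))
    \<and> (\<forall>j\<in>{1..r}.
         Theta r j a mu n (xi j) =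
           (let N = real (tailsum r n (j+1));
                q = real r - real j
            in of_nat (fact (n j))
               / (\<i> ^ (n j) * of_real (pochhammer (N + mu + (q + 1) / 2) (n j))
                  * of_real (pochhammer (N + 2 * a + q / 2) (n j)))
               * Beta (of_real a + (of_real N + \<i> * of_real (xi j)) / 2 + of_real (q / 4))
                      (of_real a + (of_real N - \<i> * of_real (xi j)) / 2 + of_real (q / 4))
               * cont_hahn (n j) (xi j / 2)
                   (of_real (a + N / 2 + q / 4))
                   (of_real (mu - a + (N + 1) / 2 + q / 4))
                   (of_real (mu - a + (N + 1) / 2 + q / 4))
                   (of_real (a + N / 2 + q / 4))))"
proof -
  define N where "N = (\<lambda>k. real (tailsum r n (k+1)))"
  define b where "b = (\<lambda>k. a + (real r - real k)/4 + N k / 2)"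
  define lam where "lam = (\<lambda>k. mu + N k + (real r - real k) / 2)"
  define h where "h = (\<lambda>k t. exp (- \<i> * of_real (xi k * t)) * of_real ((1 - tanh t ^ 2) powr (b k) * gegenbauer (n k) (lam k) (tanh t)))"
  have bpos: "b k > 0" if "k \<in> {1..r}" for k
  proof -
    have h1: "(real r - real k) / 4 \<ge> 0" using that by auto
    have h2: "N k / 2 \<ge> 0" by (simp add: N_def)
    show ?thesis unfolding b_def using h1 h2 assms(2) by linarith
  qed
  have FI: "fourier_integrand r (\<lambda>x. of_real (f_r r n a mu x)) xi = (\<lambda>x. \<Prod>k\<in>{1..r}. h k (x k))"
  proof
    fix x :: "nat \<Rightarrow> real"
    have "exp (- \<i> * of_real (\<Sum>j=1..r. xi j * x j)) = exp (\<Sum>j=1..r. - \<i> * of_real (xi j * x j))"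
      by (simp add: sum_distrib_left)
    also have "\<dots> = (\<Prod>j=1..r. exp (- \<i> * of_real (xi j * x j)))" by (simp add: exp_sum)
    finally have "exp (- \<i> * of_real (\<Sum>j=1..r. xi j * x j)) = (\<Prod>j=1..r. exp (- \<i> * of_real (xi j * x j)))" .
    then show "fourier_integrand r (\<lambda>x. of_real (f_r r n a mu x)) xi x = (\<Prod>k\<in>{1..r}. h k (x k))"
      unfolding fourier_integrand_def FR h_def b_def lam_def N_def by (simp add: prod.distrib)
  qed
  interpret P: product_sigma_finite "\<lambda>_::nat. lborel" by unfold_locales
  have hi: "integrable lborel (h k)" if "k \<in> {1..r}" for k
    unfolding h_def using C1(1)[OF bpos[OF that]] .
  have hv: "integral\<^sup>L lborel (h k) = of_real (2 powr (2 * b k - 1)) *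
      (of_real (pochhammer (2 * (real (tailsum r n (k+1)) + mu + (real r - real k) / 2)) (n k) / fact (n k))
       * Theta r k a mu n (xi k))" if "k \<in> {1..r}" for k
  proof -
    have e: "2 * lam k = 2 * (real (tailsum r n (k+1)) + mu + (real r - real k) / 2)" by (simp add: lam_def N_def)
    show ?thesis unfolding h_def C1(2)[OF bpos[OF that]] ThetaEq e[symmetric]
      by (simp add: b_def lam_def N_def mult_ac)
  qed
  have INT: "integrable (PiM {1..r} (\<lambda>_. lborel)) (fourier_integrand r (\<lambda>x. of_real (f_r r n a mu x)) xi)"
    unfolding FI by (rule P.product_integrable_prod) (auto intro: hi)
  have "fourier r (\<lambda>x. of_real (f_r r n a mu x)) xi = (\<Prod>k\<in>{1..r}. integral\<^sup>L lborel (h k))"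
    unfolding fourier_def FI by (rule P.product_integral_prod) (auto intro: hi)
  also have "\<dots> = (\<Prod>k\<in>{1..r}. of_real (2 powr (2 * b k - 1))) * (\<Prod>k\<in>{1..r}. 
       of_real (pochhammer (2 * (real (tailsum r n (k+1)) + mu + (real r - real k) / 2)) (n k) / fact (n k))
       * Theta r k a mu n (xi k))"
    unfolding prod.distrib[symmetric] by (rule prod.cong[OF refl]) (rule hv)
  also have "(\<Prod>k\<in>{1..r}. complex_of_real (2 powr (2 * b k - 1))) = of_real (2 powr (2 * real r * a + real r * (real r - 5) / 4
                       + (\<Sum>j=1..r-1. real j * real (n (j+1)))))"
  proof -
    have "(\<Prod>k\<in>{1..r}. (2::real) powr (2 * b k - 1)) = 2 powr (\<Sum>k\<in>{1..r}. (2 * b k - 1))"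
      by (simp add: powr_sum)
    also have "(\<Sum>k\<in>{1..r}. (2 * b k - 1)) = 2 * real r * a + (\<Sum>k=1..r. (real r - real k)) / 2 + (\<Sum>k=1..r. N k) - real r"
    proof -
      have "(\<Sum>k\<in>{1..r}. (2 * b k - 1)) = (\<Sum>k\<in>{1..r}. 2*a + (real r - real k)/2 + N k - 1)"
        by (rule sum.cong) (simp_all add: b_def field_simps)
      also have "\<dots> = (\<Sum>k\<in>{1..r}. 2*a) + (\<Sum>k\<in>{1..r}. (real r - real k)/2) + (\<Sum>k\<in>{1..r}. N k) - (\<Sum>k\<in>{1..r}. 1)"
        by (simp only: sum.distrib sum_subtractf)
      also have "\<dots> = 2 * real r * a + (\<Sum>k=1..r. (real r - real k)) / 2 + (\<Sum>k=1..r. N k) - real r"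
        by (simp only: sum_divide_distrib) simp
      finally show ?thesis .
    qed
    also have "\<dots> = 2 * real r * a + real r * (real r - 5) / 4 + (\<Sum>j=1..r-1. real j * real (n (j+1)))"
      unfolding sum_q N_def sum_tail by (simp add: field_simps)
    finally show ?thesis by (simp flip: of_real_prod)
  qed
  finally have VAL: "fourier r (\<lambda>x. of_real (f_r r n a mu x)) xi = of_real (2 powr (2 * real r * a + real r * (real r - 5) / 4
                       + (\<Sum>j=1..r-1. real j * real (n (j+1)))))
      * (\<Prod>j=1..r.
           of_real (pochhammer (2 * (real (tailsum r n (j+1)) + mu + (real r - real j) / 2)) (n j)
                    / fact (n j))
           * Theta r j a mu n (xi j))" .
  have HAHN: "\<forall>j\<in>{1..r}.
         Theta r j a mu n (xi j) =
           (let N = real (tailsum r n (j+1));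
                q = real r - real j
            in of_nat (fact (n j))
               / (\<i> ^ (n j) * of_real (pochhammer (N + mu + (q + 1) / 2) (n j))
                  * of_real (pochhammer (N + 2 * a + q / 2) (n j)))
               * Beta (of_real a + (of_real N + \<i> * of_real (xi j)) / 2 + of_real (q / 4))
                      (of_real a + (of_real N - \<i> * of_real (xi j)) / 2 + of_real (q / 4))
               * cont_hahn (n j) (xi j / 2)
                   (of_real (a + N / 2 + q / 4))
                   (of_real (mu - a + (N + 1) / 2 + q / 4))
                   (of_real (mu - a + (N + 1) / 2 + q / 4))
                   (of_real (a + N / 2 + q / 4)))"
    using Hahn[OF assms(2) assms(3)] by auto
  show ?thesis using INT VAL HAHN by blast
qed

end
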